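(* Let $k\ge1$, $n\ge 2k+1$, $g:=\gcd(n,k)$, and $r\in\{0,\dots,n-1\}$. Take the symmetric difference of the union of the edge sets of the $g$ cycles $C(s_0),\dots,C(s_{g-1})$ with the edge sets of the $4$-cycles $(s_{r+j},s_{r+j+k},s_{r+j+2k+1},s_{r+j+k+1})$ for $j=0,\dots,g-2$. The result is the edge set of a single cycle in $K(n,k)$ on the vertex set $\{s_0,\dots,s_{n-1}\}$.
   Context: Vertices of $K(n,k)$ are binary strings of length $n$ with $k$ ones, adjacent iff they have no $1$ at a common position. $\sigma^i$ denotes cyclic right shift by $i$ positions. For $i\in\mathbb{Z}$ (indices mod $n$), $s_i:=\sigma^i(1^k0^{n-k})$. For $x$ such a string, $f(x)$ is obtained by cyclic parenthesis matching ($1$s opening, $0$s closing brackets, each $1$ at position $i$ matched to the last $0$ of the shortest cyclic substring starting at $i$ going right with equally many $0$s and $1$s) and complementing all matched bits; $C(x)=(x,f(x),f^2(x),\dots)$ until $x$ reappears. (One has $f(s_i)=s_{i+k}$, so $C(s_i)=(s_{i+kj})_{j=0,\dots,n/g-1}$ and the cycles $C(s_0),\dots,C(s_{g-1})$ are distinct and partition $\{s_0,\dots,s_{n-1}\}$.) *)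

theory Defs
  imports Main
begin

text \<open>Binary strings are bool lists (True = 1). Positions are 0-based and read cyclically.\<close>

definition kneser_vertex :: "nat \<Rightarrow> nat \<Rightarrow> bool list \<Rightarrow> bool" where
  "kneser_vertex n k x \<longleftrightarrow> length x = n \<and> count_list x True = k"

definition kneser_adj :: "bool list \<Rightarrow> bool list \<Rightarrow> bool" where
  "kneser_adj x y \<longleftrightarrow> (\<forall>p < length x. \<not> (x ! p \<and> y ! p))"

definition sigma :: "bool list \<Rightarrow> bool list" where
  "sigma x = (if x = [] then [] else last x # butlast x)"

definition s :: "nat \<Rightarrow> nat \<Rightarrow> nat \<Rightarrow> bool list" where
  "s n k i = (sigma ^^ i) (replicate k True @ replicate (n - k) False)"

definition bal :: "bool list \<Rightarrow> nat \<Rightarrow> nat \<Rightarrow> bool" where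
  "bal x i d \<longleftrightarrow> 2 * card {j. j \<le> d \<and> x ! ((i + j) mod length x)} = d + 1"

definition opens :: "bool list \<Rightarrow> nat \<Rightarrow> bool" where
  "opens x i \<longleftrightarrow> i < length x \<and> x ! i \<and> (\<exists>d. 0 < d \<and> d < length x \<and> bal x i d)"

text \<open>Offset from a matched 1 at position i to its matching 0 (the last bit of the shortest balanced substring).\<close>
definition mlen :: "bool list \<Rightarrow> nat \<Rightarrow> nat" where
  "mlen x i = (LEAST d. 0 < d \<and> d < length x \<and> bal x i d)"

definition matched :: "bool list \<Rightarrow> nat \<Rightarrow> bool" where
  "matched x p \<longleftrightarrow> opens x p \<or> (\<exists>i. opens x i \<and> (i + mlen x i) mod length x = p)"

definition f :: "bool list \<Rightarrow> bool list" where
  "f x = map (\<lambda>p. if matched x p then \<not> x ! p else x ! p) [0..<length x]"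

definition cyc_len :: "bool list \<Rightarrow> nat" where
  "cyc_len x = (LEAST m. 0 < m \<and> (f ^^ m) x = x)"

definition cycle_edges :: "bool list \<Rightarrow> bool list set set" where
  "cycle_edges x = {{(f ^^ j) x, (f ^^ Suc j) x} | j. j < cyc_len x}"

definition four_cycle_edges :: "'a \<Rightarrow> 'a \<Rightarrow> 'a \<Rightarrow> 'a \<Rightarrow> 'a set set" where
  "four_cycle_edges a b c d = {{a, b}, {b, c}, {c, d}, {d, a}}"

definition symdiff :: "'a set \<Rightarrow> 'a set \<Rightarrow> 'a set" where
  "symdiff A B = (A - B) \<union> (B - A)"

definition is_kneser_cycle :: "nat \<Rightarrow> nat \<Rightarrow> bool list set \<Rightarrow> bool list set set \<Rightarrow> bool" where
  "is_kneser_cycle n k V E \<longleftrightarrow>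
     (\<exists>L v. L \<ge> 3 \<and> inj_on v {..<L} \<and> v ` {..<L} = V \<and>
        (\<forall>i<L. kneser_vertex n k (v i) \<and> kneser_adj (v i) (v (Suc i mod L))) \<and>
        E = {{v i, v (Suc i mod L)} | i. i < L})"

end

theory Submission
  imports Defs
begin


lemma sigma_len[simp]: "length (sigma x) = length x"
  by (cases x) (auto simp: sigma_def)

lemma sigma_nth: "p < length x \<Longrightarrow> sigma x ! p = x ! ((p + length x - 1) mod length x)"
proof -
  assume p: "p < length x"
  then have ne: "x \<noteq> []" by auto
  show ?thesis
  proof (cases p)
    case 0
    then show ?thesis using ne by (simp add: sigma_def last_conv_nth)
  next
    case (Suc q)
    have "(p + length x - 1) mod length x = q" using p Suc by simp
    then show ?thesis using ne p Suc by (simp add: sigma_def nth_butlast)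
  qed
qed

lemma s_Suc: "s n k (Suc i) = sigma (s n k i)"
  by (simp add: s_def)

lemma s_len[simp]: "k \<le> n \<Longrightarrow> length (s n k i) = n"
  by (induction i) (auto simp: s_def)

lemma s_nth: "k \<le> n \<Longrightarrow> p < n \<Longrightarrow> s n k i ! p = ((int p - int i) mod int n < int k)"
proof (induction i arbitrary: p)
  case 0
  then show ?case by (simp add: s_def nth_append)
next
  case (Suc i)
  have "s n k (Suc i) ! p = s n k i ! ((p + n - 1) mod n)"
    using Suc.prems by (simp add: s_Suc sigma_nth)
  also have "\<dots> = ((int ((p + n - 1) mod n) - int i) mod int n < int k)"
    using Suc by simp
  also have "int ((p + n - 1) mod n) = (int p + int n - 1) mod int n"
    using Suc.prems by (simp add: zmod_int of_nat_diff)
  also have "((int p + int n - 1) mod int n - int i) mod int n = (int p - int (Suc i)) mod int n"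
  proof -
    have "((int p + int n - 1) mod int n - int i) mod int n = (int p + int n - 1 - int i) mod int n"
      by (simp add: mod_diff_left_eq)
    also have "int p + int n - 1 - int i = (int p - int (Suc i)) + int n" by simp
    finally show ?thesis by simp
  qed
  finally show ?case .
qed

lemma count_sigma: "count_list (sigma x) a = count_list x a"
proof (cases x rule: rev_cases)
  case Nil then show ?thesis by (simp add: sigma_def)
next
  case (snoc ys y) then show ?thesis by (simp add: sigma_def)
qed

lemma count_rep: "count_list (replicate k True) True = k"
  by (induction k) auto

lemma s_count: "k \<le> n \<Longrightarrow> count_list (s n k i) True = k"
  by (induction i) (auto simp: s_def count_sigma count_list_0_iff count_rep)


lemma s_eq_if: "k \<le> n \<Longrightarrow> x mod n = y mod n \<Longrightarrow> s n k x = s n k y"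
proof (rule nth_equalityI)
  assume kn: "k \<le> n" and xy: "x mod n = y mod n"
  show "length (s n k x) = length (s n k y)" using kn by simp
  fix p assume "p < length (s n k x)"
  then have p: "p < n" using kn by simp
  have "int x mod int n = int y mod int n" using xy by (metis of_nat_mod)
  then have "(int p - int x) mod int n = (int p - int y) mod int n"
    by (metis mod_diff_right_eq)
  then show "s n k x ! p = s n k y ! p" using kn p by (simp add: s_nth)
qed

lemma s_eq_iff:
  assumes "0 < k" "2 * k < n"
  shows "s n k x = s n k y \<longleftrightarrow> x mod n = y mod n"
proof
  assume eq: "s n k x = s n k y"
  have kn: "k \<le> n" using assms by simp
  define D where "D = (int x - int y) mod int n"
  have D0: "0 \<le> D" "D < int n" using assms by (auto simp: D_def)
  have p1: "x mod n < n" using assms by simp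
  have ix: "int (x mod n) = int x mod int n" by (rule of_nat_mod)
  have "(int (x mod n) - int x) mod int n = (int x - int x) mod int n"
    unfolding ix by (rule mod_diff_left_eq)
  then have "(int (x mod n) - int x) mod int n = 0" by simp
  then have "s n k x ! (x mod n)" using kn p1 assms by (simp add: s_nth)
  then have "s n k y ! (x mod n)" using eq by simp
  moreover have "(int (x mod n) - int y) mod int n = D"
    unfolding ix D_def by (rule mod_diff_left_eq)
  ultimately have Dk: "D < int k" using kn p1 by (simp add: s_nth)
  show "x mod n = y mod n"
  proof (rule ccontr)
    assume ne: "x mod n \<noteq> y mod n"
    have "D \<noteq> 0"
    proof
      assume "D = 0"
      then have "int n dvd (int x - int y)" unfolding D_def by (simp add: dvd_eq_mod_eq_0)
      then have "int x mod int n = int y mod int n" by (simp add: mod_eq_dvd_iff)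
      then have "int (x mod n) = int (y mod n)" by (simp add: of_nat_mod)
      then show False using ne by simp
    qed
    define p where "p = (x + k - 1) mod n"
    have pn: "p < n" using assms by (simp add: p_def)
    have ip: "int p = (int x + int k - 1) mod int n"
      unfolding p_def using assms by (simp add: of_nat_mod of_nat_diff)
    have "(int p - int x) mod int n = (int x + int k - 1 - int x) mod int n"
      unfolding ip by (rule mod_diff_left_eq)
    also have "\<dots> = int k - 1" using assms by simp
    finally have "s n k x ! p" using kn pn assms by (simp add: s_nth)
    moreover have "(int p - int y) mod int n = D + int k - 1"
    proof -
      have "(int p - int y) mod int n = (int x + int k - 1 - int y) mod int n"
        unfolding ip by (rule mod_diff_left_eq)
      also have "int x + int k - 1 - int y = (int x - int y) + (int k - 1)" by simp
      also have "((int x - int y) + (int k - 1)) mod int n = (D + (int k - 1)) mod int n"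
        unfolding D_def by (rule mod_add_left_eq[symmetric])
      also have "\<dots> = D + int k - 1" using D0 Dk assms \<open>D \<noteq> 0\<close> by simp
      finally show ?thesis .
    qed
    then have "\<not> s n k y ! p" using kn pn \<open>D \<noteq> 0\<close> D0 by (simp add: s_nth)
    ultimately show False using eq by simp
  qed
next
  assume "x mod n = y mod n"
  then show "s n k x = s n k y" using assms by (intro s_eq_if) auto
qed

lemma s_adj:
  assumes kn: "k \<le> d" "d + k \<le> n"
  shows "kneser_adj (s n k x) (s n k (x + d)) \<and> kneser_adj (s n k (x + d)) (s n k x)"
proof -
  have k: "k \<le> n" using kn by simp
  have A: "\<not> (s n k x ! p \<and> s n k (x + d) ! p)" if p: "p < n" for p
  proof
    assume h: "s n k x ! p \<and> s n k (x + d) ! p"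
    define u where "u = (int p - int (x + d)) mod int n"
    have u: "0 \<le> u" "u < int k" using h p k by (auto simp: u_def s_nth)
    have "(int p - int x) mod int n = (u + int d) mod int n"
      unfolding u_def by (simp add: mod_add_left_eq)
    also have "\<dots> = u + int d" using u kn by simp
    finally have "\<not> (int p - int x) mod int n < int k" using u kn by simp
    then show False using h p k by (simp add: s_nth)
  qed
  show ?thesis using A k by (auto simp: kneser_adj_def)
qed

definition good :: "nat \<Rightarrow> nat \<Rightarrow> bool list set \<Rightarrow> bool" where
  "good n k e \<longleftrightarrow> (\<exists>x y. e = {x, y} \<and> kneser_vertex n k x \<and> kneser_vertex n k y \<and>
     kneser_adj x y \<and> kneser_adj y x)"

lemma s_vertex: "k \<le> n \<Longrightarrow> kneser_vertex n k (s n k x)"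
  by (simp add: kneser_vertex_def s_count)

lemma good_s:
  assumes "k \<le> d" "d + k \<le> n"
  shows "good n k {s n k x, s n k (x + d)}"
proof -
  have "k \<le> n" using assms by simp
  then show ?thesis unfolding good_def
    by (intro exI[of _ "s n k x"] exI[of _ "s n k (x + d)"]) (simp add: s_vertex s_adj[OF assms])
qed


lemma off_shift:
  "(int ((q + j) mod n) - int i) mod int n = ((int q - int i) mod int n + int j) mod int n"
proof -
  have "(int ((q + j) mod n) - int i) mod int n = ((int q + int j) mod int n - int i) mod int n"
    by (simp add: of_nat_mod)
  also have "\<dots> = (int q + int j - int i) mod int n" by (rule mod_diff_left_eq)
  also have "\<dots> = ((int q - int i) + int j) mod int n" by (simp add: algebra_simps)
  also have "\<dots> = ((int q - int i) mod int n + int j) mod int n" by (rule mod_add_left_eq[symmetric])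
  finally show ?thesis .
qed

lemma bal_s:
  assumes kn: "0 < k" "2 * k < n" and q: "q < n"
    and u: "int u = (int q - int i) mod int n" "u < k" "u + d < n"
  shows "bal (s n k i) q d \<longleftrightarrow> d + 1 = 2 * (k - u)"
proof -
  have set: "{j. j \<le> d \<and> s n k i ! ((q + j) mod length (s n k i))} = {..< min (d+1) (k - u)}"
  proof -
    have "s n k i ! ((q + j) mod n) \<longleftrightarrow> j < k - u" if j: "j \<le> d" for j
    proof -
      have "s n k i ! ((q + j) mod n) \<longleftrightarrow> (int ((q + j) mod n) - int i) mod int n < int k"
        using kn by (simp add: s_nth)
      also have "(int ((q + j) mod n) - int i) mod int n = (int u + int j) mod int n"
        by (simp add: off_shift u(1))
      also have "\<dots> = int u + int j" using u j by simp
      finally show ?thesis using u by auto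
    qed
    then show ?thesis using kn by auto
  qed
  show ?thesis unfolding bal_def set by (auto simp: min_def split: if_splits)
qed

lemma f_s_nth:
  assumes kn: "0 < k" "2 * k < n" and p: "p < n"
  shows "f (s n k i) ! p = s n k (i + k) ! p"
proof -
  let ?x = "s n k i"
  have len: "length ?x = n" using kn by simp
  define w where "w = nat ((int p - int i) mod int n)"
  have wi: "int w = (int p - int i) mod int n" using kn unfolding w_def by simp
  have "(int p - int i) mod int n < int n" using kn by simp
  then have wn: "w < n" using wi by linarith
  have xp: "?x ! p \<longleftrightarrow> w < k" using kn p by (simp add: s_nth wi[symmetric])
  have opens_iff: "opens ?x q \<longleftrightarrow> nat ((int q - int i) mod int n) < k" if q: "q < n" for q
  proof -
    define u where "u = nat ((int q - int i) mod int n)"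
    have ui: "int u = (int q - int i) mod int n" using kn unfolding u_def by simp
    have xq: "?x ! q \<longleftrightarrow> u < k" using kn q by (simp add: s_nth ui[symmetric])
    show ?thesis
    proof
      assume "opens ?x q" then show "nat ((int q - int i) mod int n) < k"
        using xq unfolding opens_def u_def by simp
    next
      assume uk: "nat ((int q - int i) mod int n) < k"
      then have "u < k" by (simp add: u_def)
      have "bal ?x q (2 * (k - u) - 1)"
        using bal_s[OF kn q ui \<open>u < k\<close>, of "2 * (k - u) - 1"] kn \<open>u < k\<close> by simp
      then show "opens ?x q" unfolding opens_def using q xq \<open>u < k\<close> kn len
        by (intro conjI exI[of _ "2 * (k - u) - 1"]) auto
    qed
  qed
  have mlen_eq: "mlen ?x q = 2 * (k - u) - 1"
    if q: "q < n" and ui: "int u = (int q - int i) mod int n" and uk: "u < k" for q u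
    unfolding mlen_def
  proof (rule Least_equality)
    have ar: "u + (2*(k-u)-1) < n" "0 < 2*(k-u)-1" "2*(k-u)-1 < n" using kn uk by arith+
    show "0 < 2 * (k - u) - 1 \<and> 2 * (k - u) - 1 < length ?x \<and> bal ?x q (2 * (k - u) - 1)"
      using bal_s[OF kn q ui uk ar(1)] ar uk len by simp
  next
    fix d assume d: "0 < d \<and> d < length ?x \<and> bal ?x q d"
    show "2 * (k - u) - 1 \<le> d"
    proof (rule ccontr)
      assume "\<not> 2 * (k - u) - 1 \<le> d"
      then have "u + d < n" using kn uk by simp
      then have "d + 1 = 2 * (k - u)" using bal_s[OF kn q ui uk, of d] d by simp
      then show False using \<open>\<not> 2 * (k - u) - 1 \<le> d\<close> by simp
    qed
  qed
  have matched_iff: "matched ?x p \<longleftrightarrow> w < 2 * k"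
  proof
    assume "matched ?x p"
    then consider "opens ?x p" | q where "opens ?x q" "(q + mlen ?x q) mod length ?x = p"
      unfolding matched_def by blast
    then show "w < 2 * k"
    proof cases
      case 1 then show ?thesis using opens_iff[OF p] w_def by simp
    next
      case 2
      have q: "q < n" using 2(1) len by (simp add: opens_def)
      define u where "u = nat ((int q - int i) mod int n)"
      have ui: "int u = (int q - int i) mod int n" using kn unfolding u_def by simp
      have uk: "u < k" using opens_iff[OF q] 2(1) u_def by simp
      have pe: "p = (q + (2 * (k - u) - 1)) mod n" using 2(2) mlen_eq[OF q ui uk] len by simp
      have "int w = (int u + int (2 * (k - u) - 1)) mod int n"
        using wi pe off_shift[of q "2 * (k - u) - 1" n i] ui by simp
      also have "\<dots> = int u + int (2 * (k - u) - 1)" using uk kn by simp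
      finally show ?thesis using uk by simp
    qed
  next
    assume w2: "w < 2 * k"
    show "matched ?x p"
    proof (cases "w < k")
      case True then show ?thesis using opens_iff[OF p] w_def matched_def by simp
    next
      case False
      define u where "u = 2 * k - 1 - w"
      have uk: "u < k" using False w2 kn unfolding u_def by simp
      define q where "q = (i + u) mod n"
      have q: "q < n" using kn by (simp add: q_def)
      have ui: "int u = (int q - int i) mod int n"
      proof -
        have "(int q - int i) mod int n = ((int i + int u) mod int n - int i) mod int n"
          by (simp add: q_def of_nat_mod)
        also have "\<dots> = (int i + int u - int i) mod int n" by (rule mod_diff_left_eq)
        also have "\<dots> = int u" using uk kn by simp
        finally show ?thesis by simp
      qed
      have oq: "opens ?x q" using opens_iff[OF q] ui uk by (metis nat_int)
      have "(q + mlen ?x q) mod n = p"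
      proof -
        have "int ((q + mlen ?x q) mod n) = (int q + int (2 * (k - u) - 1)) mod int n"
          using mlen_eq[OF q ui uk] by (simp add: of_nat_mod)
        also have "\<dots> = (int i + int u + int (2 * (k - u) - 1)) mod int n"
          by (simp add: q_def of_nat_mod mod_add_left_eq)
        also have "int i + int u + int (2 * (k - u) - 1) = int i + int w"
          using uk False w2 kn unfolding u_def by simp
        also have "(int i + int w) mod int n = (int i + (int p - int i)) mod int n"
          using wi by (simp add: mod_add_right_eq)
        also have "\<dots> = int p" using p by simp
        finally show ?thesis by linarith
      qed
      then show ?thesis unfolding matched_def using oq len by auto
    qed
  qed
  have rhs: "s n k (i + k) ! p \<longleftrightarrow> k \<le> w \<and> w < 2 * k"
  proof -
    have "s n k (i + k) ! p \<longleftrightarrow> (int p - int (i + k)) mod int n < int k"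
      using kn p by (simp add: s_nth)
    also have "(int p - int (i + k)) mod int n = (int w - int k) mod int n"
    proof -
      have "(int w - int k) mod int n = ((int p - int i) mod int n - int k) mod int n" using wi by simp
      also have "\<dots> = (int p - int i - int k) mod int n" by (rule mod_diff_left_eq)
      finally show ?thesis by (simp add: algebra_simps)
    qed
    also have "(int w - int k) mod int n < int k \<longleftrightarrow> k \<le> w \<and> w < 2 * k"
    proof (cases "k \<le> w")
      case True
      then have "0 \<le> int w - int k" "int w - int k < int n" using wn by linarith+
      then have "(int w - int k) mod int n = int w - int k" by (rule mod_pos_pos_trivial)
      then show ?thesis using True by linarith
    next
      case False
      have e: "(int w - int k) mod int n = (int w - int k + int n) mod int n" by simp
      have "0 \<le> int w - int k + int n" "int w - int k + int n < int n" using False kn by linarith+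
      then have h: "(int w - int k + int n) mod int n = int w - int k + int n" by (rule mod_pos_pos_trivial)
      have "(int w - int k) mod int n = int w - int k + int n" using trans[OF e h] .
      then show ?thesis using False kn by linarith
    qed
    finally show ?thesis .
  qed
  have "f ?x ! p = (if matched ?x p then \<not> ?x ! p else ?x ! p)"
    unfolding f_def using p len by simp
  then show ?thesis using matched_iff xp rhs by (cases "w < k"; cases "w < 2 * k") auto
qed

lemma f_s:
  assumes "0 < k" "2 * k < n"
  shows "f (s n k i) = s n k (i + k)"
  by (rule nth_equalityI) (use assms f_s_nth in \<open>auto simp: f_def\<close>)


lemma modeq_int: "(x::nat) mod n = y mod n \<longleftrightarrow> int n dvd (int x - int y)"
proof -
  have "x mod n = y mod n \<longleftrightarrow> int (x mod n) = int (y mod n)" by (rule of_nat_eq_iff[symmetric])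
  also have "\<dots> \<longleftrightarrow> int x mod int n = int y mod int n" by (simp add: of_nat_mod)
  also have "\<dots> \<longleftrightarrow> int n dvd (int x - int y)" by (rule mod_eq_dvd_iff)
  finally show ?thesis .
qed

lemma dvd_cancel:
  assumes "0 < n"
  shows "int n dvd J * int k \<longleftrightarrow> int (n div gcd n k) dvd J"
proof -
  define g where "g = gcd n k"
  define m where "m = n div g"
  define k' where "k' = k div g"
  have g0: "0 < g" using assms by (simp add: g_def)
  have n: "n = g * m" unfolding m_def g_def by simp
  have k: "k = g * k'" unfolding k'_def g_def by simp
  have cop: "coprime m k'" unfolding m_def k'_def g_def using assms by (intro div_gcd_coprime) simp
  then have copi: "coprime (int m) (int k')" by simp
  have "int n dvd J * int k \<longleftrightarrow> int m * int g dvd (J * int k') * int g"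
    by (simp add: n k algebra_simps)
  also have "\<dots> \<longleftrightarrow> int m dvd J * int k'" using g0 by (simp only: dvd_mult_cancel_right) simp
  also have "\<dots> \<longleftrightarrow> int m dvd J" using copi by (rule coprime_dvd_mult_left_iff)
  finally show ?thesis unfolding m_def g_def .
qed

lemma f_pow_s:
  assumes "0 < k" "2 * k < n"
  shows "(f ^^ j) (s n k i) = s n k (i + j * k)"
  by (induction j) (auto simp: f_s[OF assms] algebra_simps)

lemma cyc_len_s:
  assumes kn: "0 < k" "2 * k < n"
  shows "cyc_len (s n k i) = n div gcd n k"
  unfolding cyc_len_def
proof (rule Least_equality)
  have n0: "0 < n" using kn by simp
  have eq: "(f ^^ j) (s n k i) = s n k i \<longleftrightarrow> int (n div gcd n k) dvd int j" for j
  proof -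
    have "(f ^^ j) (s n k i) = s n k i \<longleftrightarrow> (i + j * k) mod n = i mod n"
      by (simp add: f_pow_s[OF kn] s_eq_iff[OF kn])
    also have "\<dots> \<longleftrightarrow> int n dvd int j * int k" by (simp add: modeq_int)
    also have "\<dots> \<longleftrightarrow> int (n div gcd n k) dvd int j" by (rule dvd_cancel[OF n0])
    finally show ?thesis .
  qed
  have m0: "0 < n div gcd n k" using n0
    by (simp add: div_greater_zero_iff gcd_le1_nat)
  show "0 < n div gcd n k \<and> (f ^^ (n div gcd n k)) (s n k i) = s n k i"
    using m0 eq by simp
  fix y assume "0 < y \<and> (f ^^ y) (s n k i) = s n k i"
  then have "int (n div gcd n k) dvd int y" "0 < y" using eq by auto
  then show "n div gcd n k \<le> y" by (simp add: dvd_imp_le)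
qed

definition CE :: "nat \<Rightarrow> nat \<Rightarrow> nat \<Rightarrow> bool list set set" where
  "CE n k c = {{s n k (c + j * k), s n k (c + Suc j * k)} | j. j < n div gcd n k}"

lemma cycle_edges_s:
  assumes "0 < k" "2 * k < n"
  shows "cycle_edges (s n k i) = CE n k i"
  unfolding cycle_edges_def CE_def cyc_len_s[OF assms] f_pow_s[OF assms]
  by (simp add: funpow_Suc_right[symmetric] f_pow_s[OF assms] del: funpow.simps)


definition cyc :: "'a set \<Rightarrow> 'a set set \<Rightarrow> bool" where
  "cyc V E \<longleftrightarrow> (\<exists>L v. L \<ge> 3 \<and> inj_on v {..<L} \<and> v ` {..<L} = V \<and>
        E = {{v i, v (Suc i mod L)} | i. i < L})"

definition Sc :: "nat \<Rightarrow> nat \<Rightarrow> nat \<Rightarrow> bool list set" where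
  "Sc n k c = {s n k x | x. x mod gcd n k = c mod gcd n k}"

lemma gdvd: "int (gcd (n::nat) k) dvd int k" "int (gcd (n::nat) k) dvd int n" by simp_all

lemma mk_eq: "int (n div gcd n k) * int k = int n * int (k div gcd n k)"
proof -
  have "int (n div gcd n k) * int k = int (n div gcd n k) * (int (gcd n k) * int (k div gcd n k))"
    by (metis dvd_mult_div_cancel gcd_dvd2 of_nat_mult)
  also have "\<dots> = (int (gcd n k) * int (n div gcd n k)) * int (k div gcd n k)" by simp
  also have "int (gcd n k) * int (n div gcd n k) = int n"
    by (metis dvd_mult_div_cancel gcd_dvd1 of_nat_mult)
  finally show ?thesis .
qed

lemma v_inj:
  assumes kn: "0 < k" "2 * k < n"
  shows "inj_on (\<lambda>j. s n k (c + j * k)) {..< n div gcd n k}"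
proof (rule inj_onI)
  fix j j' assume j: "j \<in> {..< n div gcd n k}" "j' \<in> {..< n div gcd n k}"
    and eq: "s n k (c + j * k) = s n k (c + j' * k)"
  have "int n dvd (int (c + j * k) - int (c + j' * k))"
    using eq by (simp add: s_eq_iff[OF kn] modeq_int del: of_nat_add of_nat_mult)
  then have "int n dvd (int j - int j') * int k" by (simp add: algebra_simps)
  then have d: "int (n div gcd n k) dvd (int j - int j')" using dvd_cancel kn by simp
  show "j = j'"
  proof (rule ccontr)
    assume "j \<noteq> j'"
    then have "int j - int j' \<noteq> 0" by simp
    from dvd_imp_le_int[OF this d] have "\<bar>int (n div gcd n k)\<bar> \<le> \<bar>int j - int j'\<bar>" .
    then show False using j by auto
  qed
qed

lemma v_surj:
  fixes n k c x :: nat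
  assumes kn: "0 < k" "2 * k < n" and xc: "x mod gcd n k = c mod gcd n k"
  shows "\<exists>j < n div gcd n k. x mod n = (c + j * k) mod n"
proof -
  define g where "g = gcd n k"
  define m where "m = n div g"
  have g0: "0 < g" using kn by (simp add: g_def)
  have m0: "0 < m" using kn unfolding m_def g_def by (simp add: div_greater_zero_iff gcd_le1_nat)
  have "int g dvd (int x - int c)" using xc by (simp add: modeq_int g_def)
  then obtain q where q: "int x - int c = int g * q" by (auto simp: dvd_def)
  obtain u v where uv: "u * int n + v * int k = int g"
    using bezout_int[of "int n" "int k"] by (auto simp: g_def gcd_int_int_eq)
  define J where "J = q * v"
  define j where "j = nat (J mod int m)"
  have ij: "int j = J mod int m" using m0 by (simp add: j_def)
  have "J mod int m < int m" using m0 by simp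
  then have jm: "j < m" using ij by linarith
  have Jd: "J - int j = int m * (J div int m)" using ij by (metis minus_mod_eq_mult_div)
  have mk: "int m * int k = int n * int (k div g)" using mk_eq unfolding m_def g_def by simp
  have "int x - int (c + j * k) = int g * q - int j * int k" using q by simp
  also have "\<dots> = q * (u * int n + v * int k) - int j * int k" using uv by simp
  also have "\<dots> = int n * (q * u) + (J - int j) * int k" by (simp add: J_def algebra_simps)
  also have "(J - int j) * int k = (int m * (J div int m)) * int k" by (simp only: Jd)
  also have "int n * (q * u) + (int m * (J div int m)) * int k = int n * (q * u) + (int m * int k) * (J div int m)"
    by (simp add: algebra_simps)
  also have "\<dots> = int n * (q * u + int (k div g) * (J div int m))" using mk by (simp add: algebra_simps)
  finally have "int n dvd (int x - int (c + j * k))" by simp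
  then have "x mod n = (c + j * k) mod n" by (simp add: modeq_int)
  then show ?thesis using jm unfolding m_def g_def by blast
qed

lemma m_ge3:
  fixes n k :: nat
  assumes kn: "0 < k" "2 * k < n"
  shows "3 \<le> n div gcd n k"
proof -
  define g where "g = gcd n k"
  have g0: "0 < g" using kn by (simp add: g_def)
  have gk: "g \<le> k" using kn by (simp add: g_def gcd_le2_nat)
  have n: "n = g * (n div g)" by (simp add: g_def)
  have "g * 2 < g * (n div g)" using n gk kn by linarith
  then have "2 < n div g" by simp
  then show ?thesis by (simp add: g_def)
qed

lemma mod_g_step: "((c::nat) + j * k) mod gcd n k = c mod gcd n k"
proof -
  have "gcd n k dvd j * k" by simp
  then show ?thesis by (metis dvd_imp_mod_0 mod_add_right_eq add.right_neutral)
qed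

lemma CE_alt:
  assumes kn: "0 < k" "2 * k < n"
  shows "CE n k c = {{s n k x, s n k (x + k)} | x. x mod gcd n k = c mod gcd n k}"
proof
  show "CE n k c \<subseteq> {{s n k x, s n k (x + k)} | x. x mod gcd n k = c mod gcd n k}"
  proof
    fix e assume "e \<in> CE n k c"
    then obtain j where e: "e = {s n k (c + j * k), s n k (c + Suc j * k)}" unfolding CE_def by auto
    have h: "c + Suc j * k = (c + j * k) + k" by simp
    show "e \<in> {{s n k x, s n k (x + k)} | x. x mod gcd n k = c mod gcd n k}"
      unfolding e h by (rule CollectI, rule exI[of _ "c + j * k"]) (simp add: mod_g_step)
  qed
next
  show "{{s n k x, s n k (x + k)} | x. x mod gcd n k = c mod gcd n k} \<subseteq> CE n k c"
  proof
    fix e assume "e \<in> {{s n k x, s n k (x + k)} | x. x mod gcd n k = c mod gcd n k}"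
    then obtain x where e: "e = {s n k x, s n k (x + k)}" and xc: "x mod gcd n k = c mod gcd n k" by auto
    obtain j where j: "j < n div gcd n k" "x mod n = (c + j * k) mod n" using v_surj[OF kn xc] by blast
    have kn': "k \<le> n" using kn by simp
    have 1: "s n k x = s n k (c + j * k)" by (rule s_eq_if[OF kn' j(2)])
    have "(x + k) mod n = (x mod n + k) mod n" by (simp add: mod_add_left_eq)
    also have "\<dots> = ((c + j * k) mod n + k) mod n" using j(2) by simp
    also have "\<dots> = (c + j * k + k) mod n" by (simp add: mod_add_left_eq)
    also have "c + j * k + k = c + Suc j * k" by simp
    finally have 2: "s n k (x + k) = s n k (c + Suc j * k)" by (rule s_eq_if[OF kn'])
    show "e \<in> CE n k c" unfolding CE_def e 1 2 using j(1) by blast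
  qed
qed

lemma CE_sub:
  assumes kn: "0 < k" "2 * k < n" and e: "e \<in> CE n k c"
  shows "e \<subseteq> Sc n k c"
proof -
  obtain x where ex: "e = {s n k x, s n k (x + k)}" and xc: "x mod gcd n k = c mod gcd n k"
    using e CE_alt[OF kn] by auto
  have "(x + k) mod gcd n k = c mod gcd n k" using mod_g_step[of x 1 k n] xc by simp
  then show ?thesis unfolding ex Sc_def using xc by blast
qed

lemma Sc_mem: "s n k x \<in> Sc n k x" unfolding Sc_def by blast

lemma Sc_disj:
  assumes kn: "0 < k" "2 * k < n" and ne: "c mod gcd n k \<noteq> c' mod gcd n k"
  shows "Sc n k c \<inter> Sc n k c' = {}"
proof (rule ccontr)
  assume "Sc n k c \<inter> Sc n k c' \<noteq> {}"
  then obtain x y where xy: "s n k x = s n k y" "x mod gcd n k = c mod gcd n k" "y mod gcd n k = c' mod gcd n k"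
    unfolding Sc_def by blast
  have "x mod n = y mod n" using xy(1) s_eq_iff[OF kn] by simp
  then have "x mod n mod gcd n k = y mod n mod gcd n k" by simp
  then have "x mod gcd n k = y mod gcd n k" by (simp add: mod_mod_cancel)
  then show False using xy ne by simp
qed

lemma cyc_CE:
  assumes kn: "0 < k" "2 * k < n"
  shows "cyc (Sc n k c) (CE n k c)"
  unfolding cyc_def
proof (intro exI conjI)
  let ?m = "n div gcd n k"
  let ?v = "\<lambda>j. s n k (c + j * k)"
  show "3 \<le> ?m" by (rule m_ge3[OF kn])
  show "inj_on ?v {..<?m}" by (rule v_inj[OF kn])
  show "?v ` {..<?m} = Sc n k c"
  proof
    show "?v ` {..<?m} \<subseteq> Sc n k c" unfolding Sc_def using mod_g_step by blast
    show "Sc n k c \<subseteq> ?v ` {..<?m}"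
    proof
      fix y assume "y \<in> Sc n k c"
      then obtain x where y: "y = s n k x" and xc: "x mod gcd n k = c mod gcd n k" unfolding Sc_def by blast
      obtain j where j: "j < ?m" "x mod n = (c + j * k) mod n" using v_surj[OF kn xc] by blast
      have "y = ?v j" unfolding y by (rule s_eq_if) (use kn j in auto)
      then show "y \<in> ?v ` {..<?m}" using j by blast
    qed
  qed
  have wrap: "?v (Suc i mod ?m) = s n k (c + Suc i * k)" if i: "i < ?m" for i
  proof (cases "Suc i < ?m")
    case True then show ?thesis by simp
  next
    case False
    then have si: "Suc i = ?m" using i by simp
    have "int n dvd int (c + ?m * k) - int c"
      using mk_eq[of n k] by simp
    then have "(c + ?m * k) mod n = c mod n" by (simp add: modeq_int)
    then have "s n k (c + ?m * k) = s n k c" by (intro s_eq_if) (use kn in auto)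
    then show ?thesis using si by simp
  qed
  have 1: "{{?v i, ?v (Suc i mod ?m)} | i. i < ?m} = (\<lambda>i. {?v i, ?v (Suc i mod ?m)}) ` {..<?m}" by blast
  have 2: "CE n k c = (\<lambda>i. {s n k (c + i * k), s n k (c + Suc i * k)}) ` {..<?m}"
    unfolding CE_def by blast
  have 3: "(\<lambda>i. {?v i, ?v (Suc i mod ?m)}) ` {..<?m} = (\<lambda>i. {s n k (c + i * k), s n k (c + Suc i * k)}) ` {..<?m}"
    by (rule image_cong) (auto simp: wrap)
  show "CE n k c = {{?v i, ?v (Suc i mod ?m)} | i. i < ?m}"
    unfolding 1 2 3 ..
qed


definition edges :: "nat \<Rightarrow> (nat \<Rightarrow> 'a) \<Rightarrow> 'a set set" where
  "edges L v = {{v i, v (Suc i mod L)} | i. i < L}"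

lemma edges_img: "edges L v = (\<lambda>i. {v i, v (Suc i mod L)}) ` {..<L}"
  unfolding edges_def by blast

lemma perm_img:
  fixes L :: nat
  assumes "\<pi> ` {..<L} \<subseteq> {..<L}" "inj_on \<pi> {..<L}"
  shows "\<pi> ` {..<L} = {..<L}"
  by (rule endo_inj_surj) (use assms in auto)

lemma edges_reindex:
  assumes img: "\<pi> ` {..<L} = {..<L}"
    and eq: "\<And>j. j < L \<Longrightarrow> {w j, w (Suc j mod L)} = {v (\<pi> j), v (Suc (\<pi> j) mod L)}"
  shows "edges L w = edges L v"
proof -
  have "edges L w = (\<lambda>j. {v (\<pi> j), v (Suc (\<pi> j) mod L)}) ` {..<L}"
    unfolding edges_img by (rule image_cong) (simp_all add: eq)
  also have "\<dots> = (\<lambda>i. {v i, v (Suc i mod L)}) ` (\<pi> ` {..<L})" by (simp add: image_image)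
  also have "\<dots> = edges L v" unfolding img edges_img ..
  finally show ?thesis .
qed

lemma rep_perm:
  fixes L :: nat
  assumes "inj_on v {..<L}" "v ` {..<L} = V" "\<pi> ` {..<L} = {..<L}" "inj_on \<pi> {..<L}"
  shows "inj_on (\<lambda>j. v (\<pi> j)) {..<L} \<and> (\<lambda>j. v (\<pi> j)) ` {..<L} = V"
proof
  show "inj_on (\<lambda>j. v (\<pi> j)) {..<L}"
    using assms comp_inj_on[of \<pi> "{..<L}" v] by (simp add: comp_def)
  have "(\<lambda>j. v (\<pi> j)) ` {..<L} = v ` (\<pi> ` {..<L})" by (simp add: image_image)
  then show "(\<lambda>j. v (\<pi> j)) ` {..<L} = V" using assms by simp
qed

lemma small_dvd:
  assumes "int L dvd (int j - int j')" "j < L" "j' < L"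
  shows "j = j'"
proof (rule ccontr)
  assume "j \<noteq> j'"
  then have "int j - int j' \<noteq> 0" by simp
  from dvd_imp_le_int[OF this assms(1)] show False using assms by auto
qed

lemma rot_rep:
  assumes L: "3 \<le> L" and inj: "inj_on v {..<L}" and im: "v ` {..<L} = V" and i: "i < L"
  defines "w \<equiv> \<lambda>j. v ((j + Suc i) mod L)"
  shows "inj_on w {..<L} \<and> w ` {..<L} = V \<and> edges L w = edges L v \<and>
         w 0 = v (Suc i mod L) \<and> w (L - 1) = v i"
proof -
  let ?\<pi> = "\<lambda>j. (j + Suc i) mod L"
  have L0: "0 < L" using L by simp
  have pinj: "inj_on ?\<pi> {..<L}"
  proof (rule inj_onI)
    fix j j' assume j: "j \<in> {..<L}" "j' \<in> {..<L}" and e: "?\<pi> j = ?\<pi> j'"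
    have "int L dvd (int (j + Suc i) - int (j' + Suc i))" using e by (simp only: modeq_int)
    then have "int L dvd (int j - int j')" by simp
    then show "j = j'" using small_dvd j by auto
  qed
  have "?\<pi> ` {..<L} \<subseteq> {..<L}" using L0 by auto
  from perm_img[OF this pinj] have pimg: "?\<pi> ` {..<L} = {..<L}" .
  have 1: "inj_on w {..<L} \<and> w ` {..<L} = V" unfolding w_def using rep_perm[OF inj im pimg pinj] .
  have 2: "edges L w = edges L v"
  proof (rule edges_reindex[OF pimg])
    fix j assume "j < L"
    have "(Suc j mod L + Suc i) mod L = (Suc j + Suc i) mod L" by (rule mod_add_left_eq)
    also have "\<dots> = Suc (j + Suc i) mod L" by simp
    also have "\<dots> = Suc ((j + Suc i) mod L) mod L" by (rule mod_Suc_eq[symmetric])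
    finally have "(Suc j mod L + Suc i) mod L = Suc ((j + Suc i) mod L) mod L" .
    then show "{w j, w (Suc j mod L)} = {v (?\<pi> j), v (Suc (?\<pi> j) mod L)}" unfolding w_def by simp
  qed
  have 3: "w 0 = v (Suc i mod L)" unfolding w_def by simp
  have "(L - 1 + Suc i) mod L = (i + L) mod L" using L0 by (simp add: algebra_simps)
  then have 4: "w (L - 1) = v i" unfolding w_def using i by simp
  show ?thesis using 1 2 3 4 by simp
qed

lemma rev_rep:
  assumes L: "3 \<le> L" and inj: "inj_on v {..<L}" and im: "v ` {..<L} = V"
  defines "u \<equiv> \<lambda>j. v (L - 1 - j)"
  shows "inj_on u {..<L} \<and> u ` {..<L} = V \<and> edges L u = edges L v"
proof -
  let ?r = "\<lambda>j::nat. L - 1 - j"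
  have rinj: "inj_on ?r {..<L}" by (rule inj_onI) auto
  have "?r ` {..<L} \<subseteq> {..<L}" by auto
  from perm_img[OF this rinj] have rimg: "?r ` {..<L} = {..<L}" .
  have 1: "inj_on u {..<L} \<and> u ` {..<L} = V" unfolding u_def using rep_perm[OF inj im rimg rinj] .
  let ?\<pi> = "\<lambda>j. if j < L - 1 then L - 2 - j else L - 1"
  have pinj: "inj_on ?\<pi> {..<L}" by (rule inj_onI) (auto split: if_splits)
  have "?\<pi> ` {..<L} \<subseteq> {..<L}" using L by auto
  from perm_img[OF this pinj] have pimg: "?\<pi> ` {..<L} = {..<L}" .
  have 2: "edges L u = edges L v"
  proof (rule edges_reindex[OF pimg])
    fix j assume j: "j < L"
    show "{u j, u (Suc j mod L)} = {v (?\<pi> j), v (Suc (?\<pi> j) mod L)}"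
    proof (cases "j < L - 1")
      case True
      then have "Suc j mod L = Suc j" "Suc (L - 2 - j) mod L = L - 1 - j" "L - 1 - Suc j = L - 2 - j" using L by auto
      then show ?thesis using True unfolding u_def by auto
    next
      case False
      then have "j = L - 1" using j by simp
      then have "Suc j mod L = 0" "Suc (L - 1) mod L = 0" using L by auto
      then show ?thesis using \<open>j = L - 1\<close> unfolding u_def by auto
    qed
  qed
  show ?thesis using 1 2 by simp
qed

lemma cyc_iff: "cyc V E \<longleftrightarrow> (\<exists>L v. 3 \<le> L \<and> inj_on v {..<L} \<and> v ` {..<L} = V \<and> E = edges L v)"
  unfolding cyc_def edges_def by simp

lemma cyc_orient:
  assumes "cyc V E" "{a, b} \<in> E"
  shows "\<exists>L v. 3 \<le> L \<and> inj_on v {..<L} \<and> v ` {..<L} = V \<and> E = edges L v \<and> v 0 = b \<and> v (L - 1) = a"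
proof -
  obtain L v where L: "3 \<le> L" and inj: "inj_on v {..<L}" and im: "v ` {..<L} = V" and E: "E = edges L v"
    using assms(1) unfolding cyc_iff by blast
  obtain i where i: "i < L" and ab: "{a, b} = {v i, v (Suc i mod L)}"
    using assms(2) unfolding E edges_def by blast
  have main: "\<exists>w. inj_on w {..<L} \<and> w ` {..<L} = V \<and> edges L w = edges L v' \<and> w 0 = v' (Suc i' mod L) \<and> w (L - 1) = v' i'"
    if "inj_on v' {..<L}" "v' ` {..<L} = V" "i' < L" for v' i'
    using rot_rep[OF L that] by blast
  consider "a = v i" "b = v (Suc i mod L)" | "a = v (Suc i mod L)" "b = v i"
    using ab by (metis doubleton_eq_iff)
  then show ?thesis
  proof cases
    case 1
    then show ?thesis using main[OF inj im i] L E by metis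
  next
    case 2
    define u where "u = (\<lambda>j. v (L - 1 - j))"
    have U: "inj_on u {..<L} \<and> u ` {..<L} = V \<and> edges L u = edges L v"
      unfolding u_def using rev_rep[OF L inj im] by simp
    define i' where "i' = L - 1 - Suc i mod L"
    have i': "i' < L" using L by (simp add: i'_def)
    have "u i' = a" unfolding u_def i'_def 2 using L by (simp add: Suc_le_eq)
    moreover have "u (Suc i' mod L) = b"
    proof (cases "Suc i < L")
      case True
      then have "Suc i' mod L = L - 1 - i" unfolding i'_def using L by simp
      then show ?thesis unfolding u_def 2 using i by simp
    next
      case False
      then have "i = L - 1" using i by simp
      then have "Suc i' mod L = 0" unfolding i'_def using L by simp
      then show ?thesis unfolding u_def 2 using \<open>i = L - 1\<close> by simp
    qed
    ultimately show ?thesis using main[of u i'] U i' L E by metis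
  qed
qed


lemma cyc_sub: "cyc V E \<Longrightarrow> e \<in> E \<Longrightarrow> e \<subseteq> V"
  unfolding cyc_def by auto

lemma edges_split:
  assumes "3 \<le> L"
  shows "edges L v = {{v i, v (Suc i)} | i. i < L - 1} \<union> {{v (L - 1), v 0}}"
proof -
  have "edges L v = (\<lambda>i. {v i, v (Suc i mod L)}) ` {..<L}" by (rule edges_img)
  also have "{..<L} = {..<L - 1} \<union> {L - 1}" using assms by auto
  also have "(\<lambda>i. {v i, v (Suc i mod L)}) ` ({..<L - 1} \<union> {L - 1})
      = (\<lambda>i. {v i, v (Suc i)}) ` {..<L - 1} \<union> {{v (L - 1), v 0}}"
  proof -
    have "(\<lambda>i. {v i, v (Suc i mod L)}) ` {..<L - 1} = (\<lambda>i. {v i, v (Suc i)}) ` {..<L - 1}"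
      by (rule image_cong) auto
    moreover have "Suc (L - 1) mod L = 0" using assms by simp
    ultimately show ?thesis by (simp add: image_Un)
  qed
  finally show ?thesis by blast
qed

lemma internal_not_closing:
  assumes L: "3 \<le> L" and inj: "inj_on v {..<L}"
  shows "{v (L - 1), v 0} \<notin> {{v i, v (Suc i)} | i. i < L - 1}"
proof
  assume "{v (L - 1), v 0} \<in> {{v i, v (Suc i)} | i. i < L - 1}"
  then obtain i where i: "i < L - 1" "{v (L - 1), v 0} = {v i, v (Suc i)}" by blast
  have in1: "i \<in> {..<L}" "Suc i \<in> {..<L}" "L - 1 \<in> {..<L}" "0 \<in> {..<L}" using i L by auto
  from i(2) have "v i = v (L - 1) \<or> v i = v 0" by (metis doubleton_eq_iff)
  then have "i = L - 1 \<or> i = 0" using inj in1 by (meson inj_onD)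
  then have "i = 0" using i by simp
  then have "v (Suc i) = v (L - 1)" using i(2) by (metis doubleton_eq_iff)
  then have "Suc i = L - 1" using inj in1 by (meson inj_onD)
  then show False using \<open>i = 0\<close> L by simp
qed

lemma notin_helper: "(\<And>e. e \<in> I \<Longrightarrow> e \<subseteq> V) \<Longrightarrow> x \<in> W \<Longrightarrow> V \<inter> W = {} \<Longrightarrow> {y, x} \<notin> I \<and> {x, y} \<notin> I"
  by blast

lemma cyc_merge:
  assumes c1: "cyc V1 E1" and c2: "cyc V2 E2" and disj: "V1 \<inter> V2 = {}"
    and ab: "{a, b} \<in> E1" and cd: "{c, d} \<in> E2"
  shows "cyc (V1 \<union> V2) (symdiff (E1 \<union> E2) (four_cycle_edges a b c d))"
proof -
  obtain L1 v where L1: "3 \<le> L1" and inj1: "inj_on v {..<L1}" and im1: "v ` {..<L1} = V1"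
    and E1: "E1 = edges L1 v" and v0: "v 0 = b" and vL: "v (L1 - 1) = a"
    using cyc_orient[OF c1 ab] by blast
  obtain L2 w where L2: "3 \<le> L2" and inj2: "inj_on w {..<L2}" and im2: "w ` {..<L2} = V2"
    and E2: "E2 = edges L2 w" and w0: "w 0 = d" and wL: "w (L2 - 1) = c"
    using cyc_orient[OF c2 cd] by blast
  define I1 where "I1 = {{v i, v (Suc i)} | i. i < L1 - 1}"
  define I2 where "I2 = {{w i, w (Suc i)} | i. i < L2 - 1}"
  have E1s: "E1 = I1 \<union> {{a, b}}" unfolding E1 I1_def edges_split[OF L1] v0 vL ..
  have E2s: "E2 = I2 \<union> {{c, d}}" unfolding E2 I2_def edges_split[OF L2] w0 wL ..
  have abI: "{a, b} \<notin> I1" using internal_not_closing[OF L1 inj1] unfolding I1_def v0 vL .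
  have cdI: "{c, d} \<notin> I2" using internal_not_closing[OF L2 inj2] unfolding I2_def w0 wL .
  have "L1 - 1 \<in> {..<L1}" "0 \<in> {..<L1}" "L2 - 1 \<in> {..<L2}" "0 \<in> {..<L2}" using L1 L2 by auto
  then have "v (L1 - 1) \<in> V1" "v 0 \<in> V1" "w (L2 - 1) \<in> V2" "w 0 \<in> V2" using im1 im2 by blast+
  then have aV: "a \<in> V1" "b \<in> V1" and cV: "c \<in> V2" "d \<in> V2" using vL v0 wL w0 by simp_all
  have I1V: "e \<subseteq> V1" if "e \<in> I1" for e
  proof -
    have "e \<in> E1" using that E1s by simp
    then show ?thesis by (rule cyc_sub[OF c1])
  qed
  have I2V: "e \<subseteq> V2" if "e \<in> I2" for e
  proof -
    have "e \<in> E2" using that E2s by simp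
    then show ?thesis by (rule cyc_sub[OF c2])
  qed
  have disj': "V2 \<inter> V1 = {}" using disj by (simp add: Int_commute)
  have n1: "{b, c} \<notin> I1" "{d, a} \<notin> I1" "{c, d} \<notin> I1"
    using notin_helper[OF I1V cV(1) disj, where y=b] notin_helper[OF I1V cV(2) disj, where y=a]
      notin_helper[OF I1V cV(1) disj, where y=d] by simp_all
  have n2: "{b, c} \<notin> I2" "{d, a} \<notin> I2" "{a, b} \<notin> I2"
    using notin_helper[OF I2V aV(2) disj', where y=c] notin_helper[OF I2V aV(1) disj', where y=d]
      notin_helper[OF I2V aV(1) disj', where y=b] by simp_all
  have ne: "{b, c} \<noteq> {a, b}" "{b, c} \<noteq> {c, d}" "{d, a} \<noteq> {a, b}" "{d, a} \<noteq> {c, d}"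
  proof -
    have "c \<notin> V1" "d \<notin> V1" "a \<notin> V2" "b \<notin> V2" using aV cV disj by auto
    then show "{b, c} \<noteq> {a, b}" "{b, c} \<noteq> {c, d}" "{d, a} \<noteq> {a, b}" "{d, a} \<noteq> {c, d}"
      using aV cV by (auto simp: doubleton_eq_iff)
  qed
  have r1: "x \<notin> {{a, b}, {b, c}, {c, d}, {d, a}}" if "x \<in> I1 \<union> I2" for x
    using that abI cdI n1 n2 by auto
  have r2: "{b, c} \<notin> E1 \<union> E2" "{d, a} \<notin> E1 \<union> E2"
    unfolding E1s E2s using n1 n2 ne by auto
  have res0: "symdiff (E1 \<union> E2) (four_cycle_edges a b c d) = I1 \<union> I2 \<union> {{b, c}, {d, a}}"
  proof -
    have "E1 \<union> E2 - {{a, b}, {b, c}, {c, d}, {d, a}} = I1 \<union> I2"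
      unfolding E1s E2s using r1 by blast
    moreover have "{{a, b}, {b, c}, {c, d}, {d, a}} - (E1 \<union> E2) = {{b, c}, {d, a}}"
      using r2 E1s E2s by blast
    ultimately show ?thesis unfolding symdiff_def four_cycle_edges_def by (simp only:)
  qed
  have "{{b, c}, {d, a}} = {{a, d}, {c, b}}" by (simp add: insert_commute)
  then have res: "symdiff (E1 \<union> E2) (four_cycle_edges a b c d) = I1 \<union> I2 \<union> {{a, d}, {c, b}}"
    using res0 by simp
  define L where "L = L1 + L2"
  define u where "u = (\<lambda>j. if j < L1 then v j else w (j - L1))"
  have L3: "3 \<le> L" using L1 unfolding L_def by simp
  have injU: "inj_on u {..<L}"
  proof (rule inj_onI)
    fix x y assume x: "x \<in> {..<L}" and y: "y \<in> {..<L}" and e: "u x = u y"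
    show "x = y"
    proof (cases "x < L1"; cases "y < L1")
      assume "x < L1" "y < L1" then show ?thesis using e inj1 unfolding u_def by (auto dest: inj_onD)
    next
      assume "x < L1" "\<not> y < L1"
      then have "v x \<in> V1" "w (y - L1) \<in> V2" using im1 im2 y unfolding L_def by auto
      then show ?thesis using e disj \<open>x < L1\<close> \<open>\<not> y < L1\<close> unfolding u_def by auto
    next
      assume "\<not> x < L1" "y < L1"
      then have "v y \<in> V1" "w (x - L1) \<in> V2" using im1 im2 x unfolding L_def by auto
      then show ?thesis using e disj \<open>y < L1\<close> \<open>\<not> x < L1\<close> unfolding u_def by auto
    next
      assume "\<not> x < L1" "\<not> y < L1"
      then have "x - L1 = y - L1" using e inj2 x y unfolding u_def L_def by (auto dest: inj_onD)
      then show ?thesis using \<open>\<not> x < L1\<close> \<open>\<not> y < L1\<close> by simp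
    qed
  qed
  have imU: "u ` {..<L} = V1 \<union> V2"
  proof
    show "u ` {..<L} \<subseteq> V1 \<union> V2" unfolding u_def L_def using im1 im2 by auto
    show "V1 \<union> V2 \<subseteq> u ` {..<L}"
    proof
      fix z assume "z \<in> V1 \<union> V2"
      then consider j where "j < L1" "z = v j" | j where "j < L2" "z = w j" using im1 im2 by auto
      then show "z \<in> u ` {..<L}"
      proof cases
        case (1 j) then show ?thesis unfolding u_def L_def by (intro image_eqI[of _ _ j]) auto
      next
        case (2 j) then show ?thesis unfolding u_def L_def by (intro image_eqI[of _ _ "j + L1"]) auto
      qed
    qed
  qed
  have edU: "edges L u = I1 \<union> I2 \<union> {{a, d}, {c, b}}"
  proof -
    have e1: "edges L u = {{u i, u (Suc i)} | i. i < L - 1} \<union> {{u (L - 1), u 0}}"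
      by (rule edges_split[OF L3])
    have e2: "u (L - 1) = c" "u 0 = b" using L1 L2 wL v0 unfolding u_def L_def by auto
    have idx: "{..<L - 1} = {..<L1 - 1} \<union> {L1 - 1} \<union> (\<lambda>i. i + L1) ` {..<L2 - 1}"
    proof (rule set_eqI)
      fix x show "x \<in> {..<L - 1} \<longleftrightarrow> x \<in> {..<L1 - 1} \<union> {L1 - 1} \<union> (\<lambda>i. i + L1) ` {..<L2 - 1}"
      proof
        assume "x \<in> {..<L - 1}"
        then have "x < L1 - 1 \<or> x = L1 - 1 \<or> (x \<ge> L1 \<and> x - L1 < L2 - 1)" unfolding L_def using L1 L2 by auto
        then show "x \<in> {..<L1 - 1} \<union> {L1 - 1} \<union> (\<lambda>i. i + L1) ` {..<L2 - 1}"
          by (auto intro: image_eqI[of _ _ "x - L1"])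
      next
        assume "x \<in> {..<L1 - 1} \<union> {L1 - 1} \<union> (\<lambda>i. i + L1) ` {..<L2 - 1}"
        then show "x \<in> {..<L - 1}" unfolding L_def using L1 L2 by auto
      qed
    qed
    have s1: "{{u i, u (Suc i)} | i. i < L - 1} = (\<lambda>i. {u i, u (Suc i)}) ` {..<L - 1}" by blast
    have s2: "(\<lambda>i. {u i, u (Suc i)}) ` {..<L - 1} = (\<lambda>i. {u i, u (Suc i)}) ` {..<L1 - 1} \<union> {{u (L1 - 1), u L1}} \<union> (\<lambda>i. {u (i + L1), u (Suc (i + L1))}) ` {..<L2 - 1}"
      using L1 unfolding idx by (simp add: image_Un image_image)
    have s3: "(\<lambda>i. {u i, u (Suc i)}) ` {..<L1 - 1} = I1"
    proof -
      have "(\<lambda>i. {u i, u (Suc i)}) ` {..<L1 - 1} = (\<lambda>i. {v i, v (Suc i)}) ` {..<L1 - 1}"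
        by (rule image_cong) (auto simp: u_def)
      then show ?thesis unfolding I1_def by blast
    qed
    have s4: "(\<lambda>i. {u (i + L1), u (Suc (i + L1))}) ` {..<L2 - 1} = I2"
    proof -
      have "(\<lambda>i. {u (i + L1), u (Suc (i + L1))}) ` {..<L2 - 1} = (\<lambda>i. {w i, w (Suc i)}) ` {..<L2 - 1}"
        by (rule image_cong) (auto simp: u_def)
      then show ?thesis unfolding I2_def by blast
    qed
    have s5: "u (L1 - 1) = a" "u L1 = d" using L1 vL w0 unfolding u_def by auto
    show ?thesis unfolding e1 e2 s1 s2 s3 s4 s5 by (auto simp: insert_commute)
  qed
  show ?thesis unfolding cyc_iff res using L3 injU imU edU by blast
qed


definition stepF :: "nat \<Rightarrow> nat \<Rightarrow> nat \<Rightarrow> bool list set set \<Rightarrow> nat \<Rightarrow> bool list set set" where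
  "stepF n k r A j = symdiff A (four_cycle_edges (s n k (r + j)) (s n k (r + j + k))
                                          (s n k (r + j + 2 * k + 1)) (s n k (r + j + k + 1)))"

definition Rest :: "nat \<Rightarrow> nat \<Rightarrow> nat \<Rightarrow> nat \<Rightarrow> bool list set set" where
  "Rest n k r t = (\<Union>c \<in> {Suc t..<gcd n k}. CE n k (r + c))"

definition Vt :: "nat \<Rightarrow> nat \<Rightarrow> nat \<Rightarrow> nat \<Rightarrow> bool list set" where
  "Vt n k r t = (\<Union>c \<in> {..t}. Sc n k (r + c))"

lemma symdiff_un: "F \<inter> R = {} \<Longrightarrow> symdiff (X \<union> R) F = symdiff X F \<union> R"
  unfolding symdiff_def by blast

lemma symdiff_sub: "symdiff X F \<subseteq> X \<union> F"
  unfolding symdiff_def by blast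

lemma rperm:
  fixes g r :: nat
  assumes "0 < g"
  shows "(\<lambda>c. (r + c) mod g) ` {..<g} = {..<g}"
proof (rule perm_img)
  show "(\<lambda>c. (r + c) mod g) ` {..<g} \<subseteq> {..<g}" using assms by auto
  show "inj_on (\<lambda>c. (r + c) mod g) {..<g}"
  proof (rule inj_onI)
    fix x y assume xy: "x \<in> {..<g}" "y \<in> {..<g}" and e: "(r + x) mod g = (r + y) mod g"
    have "int g dvd (int (r + x) - int (r + y))" using e by (simp only: modeq_int)
    then have "int g dvd (int x - int y)" by simp
    then show "x = y" using small_dvd xy by auto
  qed
qed

lemma rperm_ex:
  fixes g r y :: nat
  assumes "0 < g"
  shows "\<exists>c < g. y mod g = (r + c) mod g"
proof -
  have "y mod g \<in> {..<g}" using assms by simp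
  then have "y mod g \<in> (\<lambda>c. (r + c) mod g) ` {..<g}" using rperm[OF assms] by simp
  then show ?thesis by auto
qed

lemma not_mod_shift:
  fixes x d n :: nat
  assumes "0 < d" "d < n"
  shows "(x + d) mod n \<noteq> x mod n"
proof
  assume "(x + d) mod n = x mod n"
  then have "int n dvd (int (x + d) - int x)" by (simp only: modeq_int)
  then have "int n dvd int d" by simp
  then have "n dvd d" by simp
  then show False using assms by (simp add: nat_dvd_not_less)
qed

context
  fixes n k r :: nat
  assumes kn: "0 < k" "2 * k < n" and nk1: "2 * k + 1 \<le> n"
begin

lemma g0: "0 < gcd n k" using kn by simp

lemma Sc_memI: "x mod gcd n k = c mod gcd n k \<Longrightarrow> s n k x \<in> Sc n k c"
  unfolding Sc_def by blast

lemma mod_g_k: "(x + j * k) mod gcd n k = x mod gcd n k"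
  by (rule mod_g_step)

lemma CE_memI: "x mod gcd n k = c mod gcd n k \<Longrightarrow> {s n k x, s n k (x + k)} \<in> CE n k c"
  using CE_alt[OF kn] by blast

lemma CE_mod: "CE n k c = CE n k (c mod gcd n k)"
  unfolding CE_alt[OF kn] by simp

lemma good_CE: "e \<in> CE n k c \<Longrightarrow> good n k e"
  using CE_alt[OF kn] good_s[of k k n] kn by auto

lemma good_sym: "good n k {x, y} \<Longrightarrow> good n k {y, x}"
  by (simp add: insert_commute)

lemma Sc_disj2:
  assumes "c < gcd n k" "c' < gcd n k" "c \<noteq> c'"
  shows "Sc n k (r + c) \<inter> Sc n k (r + c') = {}"
proof (rule Sc_disj[OF kn])
  show "(r + c) mod gcd n k \<noteq> (r + c') mod gcd n k"
  proof
    assume "(r + c) mod gcd n k = (r + c') mod gcd n k"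
    then have "int (gcd n k) dvd (int (r + c) - int (r + c'))" by (simp only: modeq_int)
    then have "int (gcd n k) dvd (int c - int c')" by simp
    then show False using small_dvd assms by blast
  qed
qed

lemma U_eq: "(\<Union>i < gcd n k. cycle_edges (s n k i)) = CE n k r \<union> Rest n k r 0"
proof -
  have "(\<Union>i < gcd n k. cycle_edges (s n k i)) = (\<Union>i < gcd n k. CE n k i)"
    by (simp add: cycle_edges_s[OF kn])
  also have "\<dots> = (\<Union>c < gcd n k. CE n k ((r + c) mod gcd n k))"
  proof -
    have "(\<Union>c < gcd n k. CE n k ((r + c) mod gcd n k)) = (\<Union>i \<in> (\<lambda>c. (r + c) mod gcd n k) ` {..<gcd n k}. CE n k i)"
      by simp
    then show ?thesis unfolding rperm[OF g0] by simp
  qed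
  also have "\<dots> = (\<Union>c < gcd n k. CE n k (r + c))"
    using CE_mod by simp
  finally have X: "(\<Union>i < gcd n k. cycle_edges (s n k i)) = (\<Union>c < gcd n k. CE n k (r + c))" .
  have "{..<gcd n k} = insert 0 {Suc 0..<gcd n k}" using g0 by auto
  then have "(\<Union>c < gcd n k. CE n k (r + c)) = CE n k r \<union> Rest n k r 0"
    unfolding Rest_def by simp
  then show ?thesis using X by simp
qed

lemma Vt_all: "Vt n k r (gcd n k - 1) = s n k ` {..<n}"
proof
  have "{..gcd n k - 1} = {..<gcd n k}" by (metis Suc_pred' g0 lessThan_Suc_atMost)
  show "Vt n k r (gcd n k - 1) \<subseteq> s n k ` {..<n}"
  proof
    fix z assume "z \<in> Vt n k r (gcd n k - 1)"
    then obtain x where z: "z = s n k x" unfolding Vt_def Sc_def by blast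
    have "s n k x = s n k (x mod n)" using kn by (intro s_eq_if) auto
    then show "z \<in> s n k ` {..<n}" using z kn by auto
  qed
  show "s n k ` {..<n} \<subseteq> Vt n k r (gcd n k - 1)"
  proof
    fix z assume "z \<in> s n k ` {..<n}"
    then obtain y where z: "z = s n k y" by blast
    obtain c where c: "c < gcd n k" "y mod gcd n k = (r + c) mod gcd n k" using rperm_ex[OF g0] by blast
    have "z \<in> Sc n k (r + c)" unfolding z by (rule Sc_memI[OF c(2)])
    moreover have "c \<in> {..gcd n k - 1}" using c by auto
    ultimately show "z \<in> Vt n k r (gcd n k - 1)" unfolding Vt_def by blast
  qed
qed

lemma invariant:
  assumes "t < gcd n k"
  shows "\<exists>M. foldl (stepF n k r) (\<Union>i < gcd n k. cycle_edges (s n k i)) [0..<t] = M \<union> Rest n k r t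
          \<and> cyc (Vt n k r t) M \<and> {s n k (r + t), s n k (r + t + k)} \<in> M \<and> (\<forall>e\<in>M. good n k e)"
  using assms
proof (induction t)
  case 0
  have "cyc (Vt n k r 0) (CE n k r)" unfolding Vt_def using cyc_CE[OF kn, of r] by simp
  moreover have "{s n k (r + 0), s n k (r + 0 + k)} \<in> CE n k r" using CE_memI by simp
  ultimately show ?case using U_eq good_CE by (intro exI[of _ "CE n k r"]) auto
next
  case (Suc t)
  then obtain M where fo: "foldl (stepF n k r) (\<Union>i < gcd n k. cycle_edges (s n k i)) [0..<t] = M \<union> Rest n k r t"
    and cM: "cyc (Vt n k r t) M" and abM: "{s n k (r + t), s n k (r + t + k)} \<in> M"
    and gM: "\<forall>e\<in>M. good n k e" by auto
  have tg: "Suc t < gcd n k" by (rule Suc.prems)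
  define a where "a = s n k (r + t)"
  define b where "b = s n k (r + t + k)"
  define c where "c = s n k (r + t + 2 * k + 1)"
  define d where "d = s n k (r + t + k + 1)"
  define F where "F = four_cycle_edges a b c d"
  have aS: "a \<in> Sc n k (r + t)" "b \<in> Sc n k (r + t)" unfolding a_def b_def
    using Sc_memI mod_g_k[of "r + t" 1] by auto
  have cS: "c \<in> Sc n k (r + Suc t)" "d \<in> Sc n k (r + Suc t)"
  proof -
    have "r + t + 2 * k + 1 = (r + Suc t) + 2 * k" "r + t + k + 1 = (r + Suc t) + 1 * k" by simp_all
    then show "c \<in> Sc n k (r + Suc t)" "d \<in> Sc n k (r + Suc t)" unfolding c_def d_def
      using Sc_memI mod_g_k[of "r + Suc t" 2] mod_g_k[of "r + Suc t" 1] by auto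
  qed
  have dj: "Sc n k (r + t) \<inter> Sc n k (r + Suc t) = {}" using Sc_disj2[of t "Suc t"] tg by simp
  have restS: "Rest n k r t = CE n k (r + Suc t) \<union> Rest n k r (Suc t)"
  proof -
    have "{Suc t..<gcd n k} = insert (Suc t) {Suc (Suc t)..<gcd n k}" using tg by auto
    then show ?thesis unfolding Rest_def by simp
  qed
  have FR: "F \<inter> Rest n k r (Suc t) = {}"
  proof (rule ccontr)
    assume "F \<inter> Rest n k r (Suc t) \<noteq> {}"
    then obtain e c' where eF: "e \<in> F" and c': "c' \<in> {Suc (Suc t)..<gcd n k}" and eC: "e \<in> CE n k (r + c')"
      unfolding Rest_def by blast
    have eS: "e \<subseteq> Sc n k (r + c')" by (rule CE_sub[OF kn eC])
    have d1: "Sc n k (r + c') \<inter> Sc n k (r + t) = {}" using Sc_disj2[of c' t] c' by auto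
    have d2: "Sc n k (r + c') \<inter> Sc n k (r + Suc t) = {}" using Sc_disj2[of c' "Suc t"] c' by auto
    have "e \<inter> (Sc n k (r + t) \<union> Sc n k (r + Suc t)) \<noteq> {}"
      using eF aS cS unfolding F_def four_cycle_edges_def by auto
    then show False using eS d1 d2 by blast
  qed
  have cdCE: "{c, d} \<in> CE n k (r + Suc t)"
  proof -
    have "(r + t + k + 1) mod gcd n k = (r + Suc t) mod gcd n k"
      using mod_g_k[of "r + Suc t" 1] by simp
    then have "{s n k (r + t + k + 1), s n k (r + t + k + 1 + k)} \<in> CE n k (r + Suc t)" by (rule CE_memI)
    moreover have eq: "r + t + k + 1 + k = r + t + 2 * k + 1" by simp
    ultimately have "{d, c} \<in> CE n k (r + Suc t)" unfolding c_def d_def by (simp only: eq)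
    moreover have "{d, c} = {c, d}" by (rule insert_commute)
    ultimately show ?thesis by simp
  qed
  have Vdj: "Vt n k r t \<inter> Sc n k (r + Suc t) = {}"
  proof -
    have "Sc n k (r + c') \<inter> Sc n k (r + Suc t) = {}" if "c' \<le> t" for c'
      using Sc_disj2[of c' "Suc t"] that tg by auto
    then show ?thesis unfolding Vt_def by blast
  qed
  define M' where "M' = symdiff (M \<union> CE n k (r + Suc t)) F"
  have abM': "{a, b} \<in> M" using abM unfolding a_def b_def .
  have cM': "cyc (Vt n k r t \<union> Sc n k (r + Suc t)) M'"
    unfolding M'_def F_def by (rule cyc_merge[OF cM cyc_CE[OF kn] Vdj abM' cdCE])
  have VS: "Vt n k r (Suc t) = Vt n k r t \<union> Sc n k (r + Suc t)"
    unfolding Vt_def atMost_Suc by blast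
  have fo': "foldl (stepF n k r) (\<Union>i < gcd n k. cycle_edges (s n k i)) [0..<Suc t] = M' \<union> Rest n k r (Suc t)"
  proof -
    have "foldl (stepF n k r) (\<Union>i < gcd n k. cycle_edges (s n k i)) [0..<Suc t]
        = stepF n k r (M \<union> Rest n k r t) t" using fo by simp
    also have "\<dots> = symdiff ((M \<union> CE n k (r + Suc t)) \<union> Rest n k r (Suc t)) F"
      unfolding stepF_def F_def a_def b_def c_def d_def restS by (simp add: Un_assoc)
    also have "\<dots> = M' \<union> Rest n k r (Suc t)" unfolding M'_def by (rule symdiff_un[OF FR])
    finally show ?thesis .
  qed
  have newM: "{s n k (r + Suc t), s n k (r + Suc t + k)} \<in> M'"
  proof -
    let ?e = "{s n k (r + Suc t), s n k (r + Suc t + k)}"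
    have inCE: "?e \<in> CE n k (r + Suc t)" by (rule CE_memI) simp
    have eS: "?e \<subseteq> Sc n k (r + Suc t)" by (rule CE_sub[OF kn inCE])
    have na: "a \<notin> Sc n k (r + Suc t)" "b \<notin> Sc n k (r + Suc t)" using aS dj by blast+
    have "a \<notin> ?e" "b \<notin> ?e" using na eS by blast+
    then have "?e \<noteq> {a, b}" "?e \<noteq> {b, c}" "?e \<noteq> {d, a}" by blast+
    moreover have "?e \<noteq> {c, d}"
    proof
      assume "?e = {c, d}"
      then have "c \<in> ?e" by simp
      then have "c = s n k (r + Suc t) \<or> c = s n k (r + Suc t + k)" by simp
      moreover have "c \<noteq> s n k (r + Suc t)"
      proof -
        have "(r + Suc t + 2 * k) mod n \<noteq> (r + Suc t) mod n" by (rule not_mod_shift) (use kn in auto)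
        moreover have "r + t + 2 * k + 1 = r + Suc t + 2 * k" by simp
        ultimately show ?thesis unfolding c_def using s_eq_iff[OF kn] by metis
      qed
      moreover have "c \<noteq> s n k (r + Suc t + k)"
      proof -
        have "((r + Suc t + k) + k) mod n \<noteq> (r + Suc t + k) mod n" by (rule not_mod_shift) (use kn in auto)
        moreover have "r + t + 2 * k + 1 = (r + Suc t + k) + k" by simp
        ultimately show ?thesis unfolding c_def using s_eq_iff[OF kn] by metis
      qed
      ultimately show False by blast
    qed
    ultimately have "?e \<notin> F" unfolding F_def four_cycle_edges_def by auto
    then show ?thesis unfolding M'_def symdiff_def using inCE by blast
  qed
  have gF: "\<forall>e\<in>F. good n k e"
  proof -
    have k1: "k \<le> k" "k + k \<le> n" "k \<le> k + 1" "k + 1 + k \<le> n" using kn nk1 by auto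
    have 1: "good n k {a, b}" unfolding a_def b_def using good_s[OF k1(1,2), of "r + t"] by simp
    have e2: "r + t + k + (k + 1) = r + t + 2 * k + 1" by simp
    have 2: "good n k {b, c}" unfolding b_def c_def using good_s[OF k1(3,4), of "r + t + k"] by (simp only: e2)
    have e3: "r + t + k + 1 + k = r + t + 2 * k + 1" by simp
    have "good n k {d, c}" unfolding d_def c_def using good_s[OF k1(1,2), of "r + t + k + 1"] by (simp only: e3)
    then have 3: "good n k {c, d}" by (rule good_sym)
    have e4: "r + t + (k + 1) = r + t + k + 1" by simp
    have "good n k {a, d}" unfolding a_def d_def using good_s[OF k1(3,4), of "r + t"] by (simp only: e4)
    then have 4: "good n k {d, a}" by (rule good_sym)
    show ?thesis unfolding F_def four_cycle_edges_def using 1 2 3 4 by auto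
  qed
  have gM': "\<forall>e\<in>M'. good n k e"
    using symdiff_sub[of "M \<union> CE n k (r + Suc t)" F] gM gF good_CE unfolding M'_def by blast
  show ?case using fo' cM' VS newM gM' by (intro exI[of _ M']) auto
qed

end


lemma cyc_good_kneser:
  assumes "cyc V E" "\<forall>e\<in>E. good n k e"
  shows "is_kneser_cycle n k V E"
proof -
  obtain L v where L: "3 \<le> L" "inj_on v {..<L}" "v ` {..<L} = V" and E: "E = {{v i, v (Suc i mod L)} | i. i < L}"
    using assms(1) unfolding cyc_def by blast
  have "kneser_vertex n k (v i) \<and> kneser_adj (v i) (v (Suc i mod L))" if i: "i < L" for i
  proof -
    have "{v i, v (Suc i mod L)} \<in> E" using i E by blast
    then have "good n k {v i, v (Suc i mod L)}" using assms(2) by blast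
    then obtain x y where xy: "{v i, v (Suc i mod L)} = {x, y}" "kneser_vertex n k x" "kneser_vertex n k y"
      "kneser_adj x y" "kneser_adj y x" unfolding good_def by blast
    from xy(1) have "(v i = x \<and> v (Suc i mod L) = y) \<or> (v i = y \<and> v (Suc i mod L) = x)"
      by (simp add: doubleton_eq_iff)
    then show ?thesis using xy by auto
  qed
  then show ?thesis unfolding is_kneser_cycle_def using L E by blast
qed

theorem mainTheorem12:
  fixes n k r :: nat
  assumes "k \<ge> 1" and "n \<ge> 2 * k + 1" and "r < n"
  shows "is_kneser_cycle n k (s n k ` {..<n})
           (foldl (\<lambda>A j. symdiff A (four_cycle_edges (s n k (r + j)) (s n k (r + j + k))
                                          (s n k (r + j + 2 * k + 1)) (s n k (r + j + k + 1))))
                  (\<Union>i < gcd n k. cycle_edges (s n k i))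
                  [0..<gcd n k - 1])"
proof -
  have kn: "0 < k" "2 * k < n" and nk1: "2 * k + 1 \<le> n" using assms by auto
  have g0: "0 < gcd n k" using kn by simp
  have lt: "gcd n k - 1 < gcd n k" using g0 by simp
  obtain M where fo: "foldl (stepF n k r) (\<Union>i < gcd n k. cycle_edges (s n k i)) [0..<gcd n k - 1]
      = M \<union> Rest n k r (gcd n k - 1)" and cM: "cyc (Vt n k r (gcd n k - 1)) M" and gM: "\<forall>e\<in>M. good n k e"
    using invariant[OF kn nk1 lt] by blast
  have "{Suc (gcd n k - 1)..<gcd n k} = {}" using g0 by simp
  then have R: "Rest n k r (gcd n k - 1) = {}" unfolding Rest_def by simp
  have fe: "(\<lambda>A j. symdiff A (four_cycle_edges (s n k (r + j)) (s n k (r + j + k))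
                                          (s n k (r + j + 2 * k + 1)) (s n k (r + j + k + 1)))) = stepF n k r"
    by (intro ext) (simp add: stepF_def)
  have "is_kneser_cycle n k (Vt n k r (gcd n k - 1)) M" by (rule cyc_good_kneser[OF cM gM])
  then show ?thesis unfolding fe fo R Vt_all[OF kn nk1] by simp
qed


end
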